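(* Suppose that, for a given $\lambda >0$, $f(\lambda)$ is $\rho$-accurate, i.e. $|f(\lambda)|\le \rho$, and define \[ C(\{ S_k^\lambda \} _{k = 0}^{N - 1} ) - \gamma = :a \in (-\rho,\rho). \] Then, for the corresponding tuple $\{\lambda, S_k^\lambda,P_k^\lambda,F_k^\lambda\} _{k = 0}^{N - 1}$, $\{S_k^\lambda,F_k^\lambda\} _{k = 0}^{N - 1}$ is an optimal solution of the covariance selection problem with $\gamma$ replaced with $\gamma+ a \in (\gamma- \rho,\gamma + \rho)$.
   Context: Consider the stochastic LTI system $x(k+1)=Ax(k)+Bu(k)+w(k)$ with $x(k)\in\mathbb R^n$, $u(k)\in\mathbb R^m$, $x(0)\sim\mathcal N(z,V)$, $w(k)\sim\mathcal N(0,W)$ mutually independent, and linear feedback $u(k)=F_kx(k)$, $k\in\{0,\dots,N-1\}$. With $S_k=\mathbb E([x(k);u(k)][x(k);u(k)]^T)$, the covariance selection problem is: minimize $J_p(\{S_k\})=\mathrm{Tr}\big(Q_f([A\ B]S_{N-1}[A\ B]^T+W)\big)+\sum_{k=0}^{N-1}\mathrm{Tr}(\mathrm{diag}(Q_k,R_k)S_k)$ over $\{S_k,F_k\}$ subject to $S_k=\Phi(F_k,S_{k-1})$ ($k=1,\dots,N-1$), $S_0=[I_n;F_0](V+zz^T)[I_n;F_0]^T$, and $C(\{S_k\})\le\gamma$, where $C(\{S_k\})=\mathrm{Tr}\big(\tilde Q_f([A\ B]S_{N-1}[A\ B]^T+W)\big)+\sum_{k=0}^{N-1}\mathrm{Tr}(\mathrm{diag}(\tilde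 Q_k,\tilde R_k)S_k)$ and $\Phi(F,S)=[I_n;F]([A\ B]S[A\ B]^T+W)[I_n;F]^T$. Assumptions: $Q_f,\tilde Q_f,Q_k,\tilde Q_k\succeq0$, $R_k+\lambda\tilde R_k\succ0$ for all $k$, $\lambda>0$; $V\succ0$, $W\succ0$; strict feasibility of the inequality constraint. For $\lambda\ge0$, $X_N^\lambda=Q_f+\lambda\tilde Q_f$, $X_k^\lambda=A^TX_{k+1}^\lambda A-A^TX_{k+1}^\lambda B(R_k+\lambda\tilde R_k+B^TX_{k+1}^\lambda B)^{-1}B^TX_{k+1}^\lambda A+Q_k+\lambda\tilde Q_k$, $F_k^\lambda=-(R_k+\lambda\tilde R_k+B^TX_{k+1}^\lambda B)^{-1}B^TX_{k+1}^\lambda A$, $S_0^\lambda=[I;F_0^\lambda](V+zz^T)[I;F_0^\lambda]^T$, $S_k^\lambda=\Phi(F_k^\lambda,S_{k-1}^\lambda)$, $P_k^\lambda=\begin{bmatrix}Q_k+\lambda\tilde Q_k+A^TX_{k+1}^\lambda A & A^TX_{k+1}^\lambda B\\ B^TX_{k+1}^\lambda A & R_k+\lambda\tilde R_k+B^TX_{k+1}^\lambda B\end{bmatrix}$, and $f(\lambda)=C(\{S_k^\lambda\}_{k=0}^{N-1})-\gamma$. It was shown that for any $\lambda>0$ with $C(\{S_k^\lambda\})$ equal to the constraint level, $\{(S_k^\lambda,F_k^\lambda)\}$ is optimal for the problem with that constraint level. The setting is that $\lambda$ is obtained approximately by a bisection search on $f$, so $f(\lambda)=0$ holds only up to finite precision.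 *)

theory Defs
  imports "HOL-Analysis.Analysis"
begin

definition psd :: "real^'n^'n \<Rightarrow> bool" where
  "psd M \<longleftrightarrow> transpose M = M \<and> (\<forall>x. 0 \<le> x \<bullet> (M *v x))"

definition pd :: "real^'n^'n \<Rightarrow> bool" where
  "pd M \<longleftrightarrow> transpose M = M \<and> (\<forall>x. x \<noteq> 0 \<longrightarrow> 0 < x \<bullet> (M *v x))"

text \<open>Block matrices. The stacked vector [x;u] lives in real^('n + 'm).\<close>
definition blkAB :: "real^'n^'n \<Rightarrow> real^'m^'n \<Rightarrow> real^('n + 'm)^'n" where
  "blkAB A B = (\<chi> i j. case j of Inl a \<Rightarrow> A $ i $ a | Inr b \<Rightarrow> B $ i $ b)"

definition stackIF :: "real^'n^'m \<Rightarrow> real^'n^('n + 'm)" where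
  "stackIF F = (\<chi> i j. case i of Inl a \<Rightarrow> (mat 1 :: real^'n^'n) $ a $ j | Inr b \<Rightarrow> F $ b $ j)"

definition diagblk :: "real^'n^'n \<Rightarrow> real^'m^'m \<Rightarrow> real^('n + 'm)^('n + 'm)" where
  "diagblk Q R = (\<chi> i j. case (i, j) of (Inl a, Inl b) \<Rightarrow> Q $ a $ b
                                       | (Inr a, Inr b) \<Rightarrow> R $ a $ b
                                       | _ \<Rightarrow> 0)"

definition outer :: "real^'n \<Rightarrow> real^'n^'n" where
  "outer z = (\<chi> i j. z $ i * z $ j)"

definition Phi :: "real^'n^'n \<Rightarrow> real^'m^'n \<Rightarrow> real^'n^'n \<Rightarrow> real^'n^'m
                   \<Rightarrow> real^('n + 'm)^('n + 'm) \<Rightarrow> real^('n + 'm)^('n + 'm)" where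
  "Phi A B W F S = stackIF F ** (blkAB A B ** S ** transpose (blkAB A B) + W) ** transpose (stackIF F)"

text \<open>Generic quadratic cost: Tr(Qf([A B] S_{N-1} [A B]^T + W)) + sum_{k<N} Tr(diag(Q_k,R_k) S_k).
  Used both for J_p (with Q_f, Q_k, R_k) and for C (with the tilde matrices).\<close>
definition cost :: "real^'n^'n \<Rightarrow> real^'m^'n \<Rightarrow> real^'n^'n \<Rightarrow> nat
                    \<Rightarrow> real^'n^'n \<Rightarrow> (nat \<Rightarrow> real^'n^'n) \<Rightarrow> (nat \<Rightarrow> real^'m^'m)
                    \<Rightarrow> (nat \<Rightarrow> real^('n + 'm)^('n + 'm)) \<Rightarrow> real" where
  "cost A B W N Qf Q R S =
     trace (Qf ** (blkAB A B ** S (N - 1) ** transpose (blkAB A B) + W))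
     + (\<Sum>k<N. trace (diagblk (Q k) (R k) ** S k))"

definition dyn_feasible :: "real^'n^'n \<Rightarrow> real^'m^'n \<Rightarrow> real^'n^'n \<Rightarrow> real^'n^'n \<Rightarrow> real^'n \<Rightarrow> nat
      \<Rightarrow> (nat \<Rightarrow> real^('n + 'm)^('n + 'm)) \<Rightarrow> (nat \<Rightarrow> real^'n^'m) \<Rightarrow> bool" where
  "dyn_feasible A B W V z N S F \<longleftrightarrow>
     S 0 = stackIF (F 0) ** (V + outer z) ** transpose (stackIF (F 0)) \<and>
     (\<forall>k. 1 \<le> k \<and> k < N \<longrightarrow> S k = Phi A B W (F k) (S (k - 1)))"

definition cov_optimal :: "real^'n^'n \<Rightarrow> real^'m^'n \<Rightarrow> real^'n^'n \<Rightarrow> real^'n^'n \<Rightarrow> real^'n \<Rightarrow> nat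
      \<Rightarrow> real^'n^'n \<Rightarrow> (nat \<Rightarrow> real^'n^'n) \<Rightarrow> (nat \<Rightarrow> real^'m^'m)
      \<Rightarrow> real^'n^'n \<Rightarrow> (nat \<Rightarrow> real^'n^'n) \<Rightarrow> (nat \<Rightarrow> real^'m^'m) \<Rightarrow> real
      \<Rightarrow> (nat \<Rightarrow> real^('n + 'm)^('n + 'm)) \<Rightarrow> (nat \<Rightarrow> real^'n^'m) \<Rightarrow> bool" where
  "cov_optimal A B W V z N Qf Q R Qft Qt Rt g S F \<longleftrightarrow>
     dyn_feasible A B W V z N S F \<and> cost A B W N Qft Qt Rt S \<le> g \<and>
     (\<forall>S' F'. dyn_feasible A B W V z N S' F' \<and> cost A B W N Qft Qt Rt S' \<le> g
        \<longrightarrow> cost A B W N Qf Q R S \<le> cost A B W N Qf Q R S')"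

text \<open>Riccati recursion, indexed backwards: riccX_rev j = X_{N-j}.
  Here Qf, Q, R are already the combined weights (Q_f + lam Qt_f etc.).\<close>
fun riccX_rev :: "real^'n^'n \<Rightarrow> real^'m^'n \<Rightarrow> nat \<Rightarrow> real^'n^'n \<Rightarrow> (nat \<Rightarrow> real^'n^'n)
                  \<Rightarrow> (nat \<Rightarrow> real^'m^'m) \<Rightarrow> nat \<Rightarrow> real^'n^'n" where
  "riccX_rev A B N Qf Q R 0 = Qf"
| "riccX_rev A B N Qf Q R (Suc j) =
     (let X = riccX_rev A B N Qf Q R j; k = N - Suc j in
       transpose A ** X ** A
       - transpose A ** X ** B ** matrix_inv (R k + transpose B ** X ** B) ** transpose B ** X ** A
       + Q k)"

definition riccX :: "real^'n^'n \<Rightarrow> real^'m^'n \<Rightarrow> nat \<Rightarrow> real^'n^'n \<Rightarrow> (nat \<Rightarrow> real^'n^'n)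
                  \<Rightarrow> (nat \<Rightarrow> real^'m^'m) \<Rightarrow> nat \<Rightarrow> real^'n^'n" where
  "riccX A B N Qf Q R k = riccX_rev A B N Qf Q R (N - k)"

definition Xlam where
  "Xlam A B N Qf Q R Qft Qt Rt lam k =
     riccX A B N (Qf + lam *\<^sub>R Qft) (\<lambda>i. Q i + lam *\<^sub>R Qt i) (\<lambda>i. R i + lam *\<^sub>R Rt i) k"

definition Flam :: "real^'n^'n \<Rightarrow> real^'m^'n \<Rightarrow> nat \<Rightarrow> real^'n^'n \<Rightarrow> (nat \<Rightarrow> real^'n^'n)
     \<Rightarrow> (nat \<Rightarrow> real^'m^'m) \<Rightarrow> real^'n^'n \<Rightarrow> (nat \<Rightarrow> real^'n^'n) \<Rightarrow> (nat \<Rightarrow> real^'m^'m)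
     \<Rightarrow> real \<Rightarrow> nat \<Rightarrow> real^'n^'m" where
  "Flam A B N Qf Q R Qft Qt Rt lam k =
     (let X = Xlam A B N Qf Q R Qft Qt Rt lam (Suc k) in
      - (matrix_inv (R k + lam *\<^sub>R Rt k + transpose B ** X ** B) ** transpose B ** X ** A))"

fun Slam :: "real^'n^'n \<Rightarrow> real^'m^'n \<Rightarrow> real^'n^'n \<Rightarrow> real^'n^'n \<Rightarrow> real^'n \<Rightarrow> nat
     \<Rightarrow> real^'n^'n \<Rightarrow> (nat \<Rightarrow> real^'n^'n) \<Rightarrow> (nat \<Rightarrow> real^'m^'m)
     \<Rightarrow> real^'n^'n \<Rightarrow> (nat \<Rightarrow> real^'n^'n) \<Rightarrow> (nat \<Rightarrow> real^'m^'m)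
     \<Rightarrow> real \<Rightarrow> nat \<Rightarrow> real^('n + 'm)^('n + 'm)" where
  "Slam A B W V z N Qf Q R Qft Qt Rt lam 0 =
     (let F0 = Flam A B N Qf Q R Qft Qt Rt lam 0 in
      stackIF F0 ** (V + outer z) ** transpose (stackIF F0))"
| "Slam A B W V z N Qf Q R Qft Qt Rt lam (Suc k) =
     Phi A B W (Flam A B N Qf Q R Qft Qt Rt lam (Suc k)) (Slam A B W V z N Qf Q R Qft Qt Rt lam k)"

end

theory Submission
  imports Defs
begin


lemma sym_inner:
  fixes M :: "real^'n^'n"
  assumes "transpose M = M"
  shows "x \<bullet> (M *v y) = y \<bullet> (M *v x)"
proof -
  have "x \<bullet> (M *v y) = (x v* M) \<bullet> y" by (simp add: dot_lmul_matrix)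
  also have "x v* M = M *v x" by (metis assms vector_transpose_matrix)
  finally show ?thesis by (simp add: inner_commute)
qed

lemma inner_transpose:
  fixes C :: "real^'n^'m"
  shows "x \<bullet> (transpose C *v y) = (C *v x) \<bullet> y"
  by (metis dot_lmul_matrix inner_commute transpose_matrix_vector)

lemma pd_psd: "pd M \<Longrightarrow> psd M"
  unfolding pd_def psd_def by (metis inner_zero_left order.refl less_imp_le)

lemma psd_add: "psd M \<Longrightarrow> psd N \<Longrightarrow> psd (M + N)"
  unfolding psd_def by (auto simp: matrix_vector_mult_add_rdistrib inner_add_right transpose_def vec_eq_iff)

lemma pd_add_psd: "pd M \<Longrightarrow> psd N \<Longrightarrow> pd (M + N)"
  unfolding psd_def pd_def
  by (auto simp: matrix_vector_mult_add_rdistrib inner_add_right transpose_def vec_eq_iff add_pos_nonneg)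

lemma transpose_add: "transpose (M + N) = transpose M + transpose N"
  by (simp add: transpose_def vec_eq_iff)

lemma transpose_diff: "transpose (M - N) = transpose M - transpose N"
  by (simp add: transpose_def vec_eq_iff)

lemma transpose_uminus: "transpose (- M) = - transpose M"
  by (simp add: transpose_def vec_eq_iff)

lemma psd_congr:
  fixes C :: "real^'m^'n"
  assumes "psd M"
  shows "psd (transpose C ** M ** C)"
  unfolding psd_def
proof (intro conjI allI)
  show "transpose (transpose C ** M ** C) = transpose C ** M ** C"
    using assms by (simp add: psd_def matrix_transpose_mul matrix_mul_assoc)
  fix x
  have "x \<bullet> ((transpose C ** M ** C) *v x) = (C *v x) \<bullet> (M *v (C *v x))"
  proof -
    have "x \<bullet> ((transpose C ** M ** C) *v x) = x \<bullet> ((M *v (C *v x)) v* C)"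
      by (simp add: matrix_vector_mul_assoc[symmetric])
    also have "\<dots> = (C *v x) \<bullet> (M *v (C *v x))" by (metis dot_lmul_matrix inner_commute)
    finally show ?thesis .
  qed
  then show "0 \<le> x \<bullet> ((transpose C ** M ** C) *v x)" using assms by (simp add: psd_def)
qed

lemma outer_mult: "outer z *v x = (z \<bullet> x) *\<^sub>R z"
  by (simp add: outer_def matrix_vector_mult_def inner_vec_def vec_eq_iff sum_distrib_left sum_distrib_right mult_ac)

lemma psd_outer: "psd (outer z)"
  unfolding psd_def
proof (intro conjI allI)
  show "transpose (outer z) = outer z" by (simp add: transpose_def outer_def vec_eq_iff mult.commute)
  fix x show "0 \<le> x \<bullet> (outer z *v x)" by (simp add: outer_mult inner_commute)
qed

lemma trace_outer: "trace (D ** outer v) = v \<bullet> (D *v v)"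
  by (simp add: trace_def matrix_matrix_mult_def outer_def inner_vec_def matrix_vector_mult_def
      sum_distrib_left mult_ac)

lemma trace_scaleR: "trace (c *\<^sub>R M) = c * trace (M::real^'n^'n)"
  by (simp add: trace_def sum_distrib_left)

lemma pd_invertible:
  fixes G :: "real^'n^'n"
  assumes "pd G" shows "invertible G"
proof -
  have "\<forall>x. G *v x = 0 \<longrightarrow> x = 0"
    using assms unfolding pd_def by (metis inner_zero_right less_irrefl)
  then show ?thesis by (simp add: invertible_left_inverse matrix_left_invertible_ker)
qed

lemma matrix_inv_props:
  fixes G :: "real^'n^'n"
  assumes "invertible G"
  shows "G ** matrix_inv G = mat 1" "matrix_inv G ** G = mat 1"
  using assms unfolding invertible_def matrix_inv_def by (metis (mono_tags, lifting) someI_ex)+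

lemma matrix_inv_sym:
  fixes G :: "real^'n^'n"
  assumes "invertible G" "transpose G = G"
  shows "transpose (matrix_inv G) = matrix_inv G"
proof -
  let ?Gi = "matrix_inv G"
  have "transpose ?Gi = transpose ?Gi ** (G ** ?Gi)" using matrix_inv_props[OF assms(1)] by simp
  also have "\<dots> = transpose (transpose G ** ?Gi) ** ?Gi" by (simp add: matrix_transpose_mul matrix_mul_assoc)
  also have "\<dots> = ?Gi" using matrix_inv_props[OF assms(1)] assms(2) by simp
  finally show ?thesis .
qed




lemma mv_axis: "(M *v axis j (1::real)) $ i = M $ i $ j"
  by (simp add: matrix_vector_mult_def axis_def if_distrib cong: if_cong)

lemma entry_form: "axis i 1 \<bullet> (M *v axis j (1::real)) = M $ i $ j"
  by (simp add: inner_axis' mv_axis)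

lemma scaleR_mv: "(k *\<^sub>R A) *v x = k *\<^sub>R (A *v (x::real^'n))"
  by (simp add: matrix_vector_mult_def vec_eq_iff sum_distrib_left mult_ac)

lemma quad_expand:
  fixes M :: "real^'n^'n"
  assumes "transpose M = M"
  shows "(x - t *\<^sub>R y) \<bullet> (M *v (x - t *\<^sub>R y)) = x \<bullet> (M *v x) - 2 * t * (y \<bullet> (M *v x)) + t\<^sup>2 * (y \<bullet> (M *v y))"
proof -
  have s: "x \<bullet> (M *v y) = y \<bullet> (M *v x)" by (rule sym_inner[OF assms])
  show ?thesis
    by (simp add: matrix_vector_mult_diff_distrib matrix_vector_mult_scaleR inner_diff_left inner_diff_right s
        power2_eq_square algebra_simps)
qed

lemma psd_diag_nonneg: "psd M \<Longrightarrow> 0 \<le> M $ p $ p"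
  using entry_form[of p M p] unfolding psd_def by metis

lemma psd_zero_diag:
  fixes M :: "real^'n^'n"
  assumes "psd M" "M $ p $ p = 0"
  shows "M $ p $ j = 0"
proof (rule ccontr)
  assume ne: "M $ p $ j \<noteq> 0"
  have sym: "transpose M = M" using assms unfolding psd_def by simp
  define t where "t = (M $ j $ j + 1) / (2 * M $ p $ j)"
  have "0 \<le> (axis j 1 - t *\<^sub>R axis p 1) \<bullet> (M *v (axis j 1 - t *\<^sub>R axis p 1))"
    using assms unfolding psd_def by blast
  also have "\<dots> = M $ j $ j - 2 * t * M $ p $ j + t\<^sup>2 * M $ p $ p"
    by (simp add: quad_expand[OF sym] entry_form)
  also have "\<dots> = -1" using ne assms(2) by (simp add: t_def field_simps)
  finally show False by simp
qed

lemma trace_psd_aux: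
  fixes D :: "real^'n^'n"
  assumes D: "psd D" and fin: "finite I"
  shows "\<forall>S. psd S \<and> (\<forall>i j. S $ i $ j \<noteq> 0 \<longrightarrow> i \<in> I \<and> j \<in> I) \<longrightarrow> 0 \<le> trace (D ** S)"
  using fin
proof (induction I rule: finite_induct)
  case empty
  show ?case
  proof (intro allI impI)
    fix S :: "real^'n^'n" assume "psd S \<and> (\<forall>i j. S $ i $ j \<noteq> 0 \<longrightarrow> i \<in> {} \<and> j \<in> {})"
    then have "S = 0" by (auto simp: vec_eq_iff)
    then show "0 \<le> trace (D ** S)" by (simp add: trace_def)
  qed
next
  case (insert p I)
  show ?case
  proof (intro allI impI)
    fix S :: "real^'n^'n"
    assume H: "psd S \<and> (\<forall>i j. S $ i $ j \<noteq> 0 \<longrightarrow> i \<in> insert p I \<and> j \<in> insert p I)"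
    then have pS: "psd S" and supp: "\<And>i j. S $ i $ j \<noteq> 0 \<Longrightarrow> i \<in> insert p I \<and> j \<in> insert p I" by auto
    have sym: "transpose S = S" using pS unfolding psd_def by simp
    have symE: "S $ i $ j = S $ j $ i" for i j proof -
      have "S $ i $ j = transpose S $ j $ i" by (simp add: transpose_def)
      then show ?thesis using sym by simp
    qed
    show "0 \<le> trace (D ** S)"
    proof (cases "S $ p $ p = 0")
      case True
      have z: "S $ p $ j = 0" for j using psd_zero_diag[OF pS True] .
      have "\<forall>i j. S $ i $ j \<noteq> 0 \<longrightarrow> i \<in> I \<and> j \<in> I"
        using supp z symE by (metis insert_iff)
      then show ?thesis using insert.IH pS by blast
    next
      case False
      define c where "c = S $ p $ p"
      have cpos: "c > 0" using False psd_diag_nonneg[OF pS, of p] unfolding c_def by linarith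
      define v where "v = S $ p"
      define S' where "S' = S - (1 / c) *\<^sub>R outer v"
      have Sdec: "S = (1 / c) *\<^sub>R outer v + S'" by (simp add: S'_def)
      have tr: "trace (D ** S) = (1/c) * (v \<bullet> (D *v v)) + trace (D ** S')"
        by (simp add: Sdec matrix_add_ldistrib trace_add matrix_scalar_ac scalar_matrix_assoc[symmetric] trace_scaleR trace_outer)
      have nn1: "0 \<le> (1/c) * (v \<bullet> (D *v v))" using D cpos unfolding psd_def by simp
      have S'E: "S' $ i $ j = S $ i $ j - S $ p $ i * S $ p $ j / c" for i j
        by (simp add: S'_def outer_def v_def)
      have psdS': "psd S'"
        unfolding psd_def
      proof (intro conjI allI)
        show "transpose S' = S'"
          by (simp add: vec_eq_iff transpose_def S'E symE mult.commute)
        fix x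
        define t where "t = (v \<bullet> x) / c"
        have Sx: "axis p 1 \<bullet> (S *v x) = v \<bullet> x"
          by (simp add: inner_axis' matrix_vector_mul_component v_def)
        have "0 \<le> (x - t *\<^sub>R axis p 1) \<bullet> (S *v (x - t *\<^sub>R axis p 1))"
          using pS unfolding psd_def by blast
        also have "\<dots> = x \<bullet> (S *v x) - (v \<bullet> x)\<^sup>2 / c"
          using cpos by (simp add: quad_expand[OF sym] entry_form Sx t_def c_def[symmetric] power2_eq_square field_simps)
        also have "\<dots> = x \<bullet> (S' *v x)"
          by (simp add: S'_def matrix_vector_mult_diff_rdistrib inner_diff_right
               outer_mult power2_eq_square inner_commute scaleR_mv)
        finally show "0 \<le> x \<bullet> (S' *v x)" .
      qed
      have "\<forall>i j. S' $ i $ j \<noteq> 0 \<longrightarrow> i \<in> I \<and> j \<in> I"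
      proof (intro allI impI)
        fix i j assume ne: "S' $ i $ j \<noteq> 0"
        have "i \<noteq> p" using ne cpos by (auto simp: S'E c_def symE)
        moreover have "j \<noteq> p" using ne cpos by (auto simp: S'E c_def symE)
        moreover have "S $ i $ j \<noteq> 0 \<or> S $ p $ i \<noteq> 0 \<and> S $ p $ j \<noteq> 0" using ne by (auto simp: S'E)
        ultimately show "i \<in> I \<and> j \<in> I" using supp symE by (metis insert_iff)
      qed
      then have "0 \<le> trace (D ** S')" using insert.IH psdS' by blast
      then show ?thesis using tr nn1 by linarith
    qed
  qed
qed

lemma trace_psd_nonneg:
  fixes D S :: "real^'n^'n"
  assumes "psd D" "psd S"
  shows "0 \<le> trace (D ** S)"
  using trace_psd_aux[OF assms(1), of UNIV] assms(2) by simp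




lemma mm_add_r: "((A::real^'n^'m) + B) ** C = A ** C + B ** C"
  by (simp add: matrix_matrix_mult_def vec_eq_iff sum.distrib distrib_right)
lemma mm_diff_l: "(A::real^'n^'m) ** (B - C) = A ** B - A ** C"
  by (simp add: matrix_matrix_mult_def vec_eq_iff sum_subtractf right_diff_distrib)
lemma mm_diff_r: "((A::real^'n^'m) - B) ** C = A ** C - B ** C"
  by (simp add: matrix_matrix_mult_def vec_eq_iff sum_subtractf left_diff_distrib)
lemma mm_neg_l: "(- (A::real^'n^'m)) ** B = - (A ** B)"
  by (simp add: matrix_matrix_mult_def vec_eq_iff sum_negf)
lemma mm_neg_r: "(A::real^'n^'m) ** (- B) = - (A ** B)"
  by (simp add: matrix_matrix_mult_def vec_eq_iff sum_negf)

lemmas mm_simps = matrix_add_ldistrib mm_add_r mm_diff_l mm_diff_r mm_neg_l mm_neg_r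
  matrix_transpose_mul transpose_add transpose_diff transpose_uminus matrix_mul_assoc

lemma riccati_complete:
  fixes A :: "real^'n^'n" and B :: "real^'m^'n" and X Q :: "real^'n^'n"
    and R G Gi :: "real^'m^'m" and F :: "real^'n^'m"
  assumes G: "G = R + transpose B ** X ** B"
    and GGi: "G ** Gi = mat 1" and GiG: "Gi ** G = mat 1"
    and Gis: "transpose Gi = Gi" and Xs: "transpose X = X"
  shows "Q + transpose F ** R ** F + transpose (A + B ** F) ** X ** (A + B ** F)
       = (transpose A ** X ** A - transpose A ** X ** B ** Gi ** transpose B ** X ** A + Q)
         + transpose (F - (- (Gi ** transpose B ** X ** A))) ** G ** (F - (- (Gi ** transpose B ** X ** A)))"
proof -
  have c1: "M ** G ** Gi = M" for M :: "real^'m^'k"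
    by (metis GGi matrix_mul_assoc matrix_mul_rid)
  have c2: "M ** Gi ** G = M" for M :: "real^'m^'k"
    by (metis GiG matrix_mul_assoc matrix_mul_rid)
  have e: "transpose (F - (- (Gi ** transpose B ** X ** A))) ** G ** (F - (- (Gi ** transpose B ** X ** A)))
     = transpose F ** G ** F + transpose F ** transpose B ** X ** A + transpose A ** X ** B ** F
       + transpose A ** X ** B ** Gi ** transpose B ** X ** A"
    by (simp add: mm_simps Gis Xs c1 c2)
  show ?thesis
    unfolding e by (simp add: G mm_simps Xs algebra_simps)
qed




definition stk :: "real^'k^'n \<Rightarrow> real^'k^'m \<Rightarrow> real^'k^('n+'m)" where
  "stk M N = (\<chi> i j. case i of Inl a \<Rightarrow> M $ a $ j | Inr b \<Rightarrow> N $ b $ j)"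

lemma sum_UNIV_plus:
  "(\<Sum>x\<in>(UNIV::('a::finite + 'b::finite) set). f x) = (\<Sum>a\<in>UNIV. f (Inl a)) + (\<Sum>b\<in>UNIV. f (Inr b))"
proof -
  have "(\<Sum>x\<in>(UNIV::('a + 'b) set). f x) = (\<Sum>x\<in>(UNIV <+> UNIV). f x)" by simp
  also have "\<dots> = (\<Sum>a\<in>UNIV. f (Inl a)) + (\<Sum>b\<in>UNIV. f (Inr b))"
    by (subst sum.Plus) (simp_all add: comp_def)
  finally show ?thesis .
qed

lemma stackIF_stk: "stackIF F = stk (mat 1) F"
  by (simp add: stackIF_def stk_def)

lemma blkAB_stk: "blkAB A B = transpose (stk (transpose A) (transpose B))"
  by (simp add: blkAB_def stk_def transpose_def vec_eq_iff split: sum.split)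

lemma stk_tmul: "transpose (stk M1 N1) ** stk M2 N2 = transpose M1 ** M2 + transpose N1 ** N2"
  by (simp add: stk_def transpose_def matrix_matrix_mult_def vec_eq_iff sum_UNIV_plus)

lemma diag_stk: "diagblk Q R ** stk M N = stk (Q ** M) (R ** N)"
  by (simp add: diagblk_def stk_def matrix_matrix_mult_def vec_eq_iff sum_UNIV_plus split: sum.split)

lemma blk_stack: "blkAB A B ** stackIF F = A + B ** F"
  by (simp add: blkAB_stk stackIF_stk stk_tmul)

lemma KF:
  "transpose (stackIF F) ** (diagblk Q R + transpose (blkAB A B) ** X ** blkAB A B) ** stackIF F
   = Q + transpose F ** R ** F + transpose (A + B ** F) ** X ** (A + B ** F)"
proof -
  have "transpose (stackIF F) ** (diagblk Q R + transpose (blkAB A B) ** X ** blkAB A B) ** stackIF F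
     = transpose (stackIF F) ** (diagblk Q R ** stackIF F)
       + transpose (blkAB A B ** stackIF F) ** X ** (blkAB A B ** stackIF F)"
    by (simp add: mm_simps)
  also have "\<dots> = Q + transpose F ** R ** F + transpose (A + B ** F) ** X ** (A + B ** F)"
    by (simp only: blk_stack) (simp add: stackIF_stk diag_stk stk_tmul matrix_mul_assoc)
  finally show ?thesis .
qed




lemma step_identity:
  fixes A :: "real^'n^'n" and B :: "real^'m^'n" and X' Q W Sg :: "real^'n^'n"
    and R G :: "real^'m^'m" and F :: "real^'n^'m"
  assumes G: "G = R + transpose B ** X' ** B" and inv: "invertible G" and Gs: "transpose G = G"
    and Xs: "transpose X' = X'"
    and S: "S = stackIF F ** Sg ** transpose (stackIF F)"
  shows "trace (diagblk Q R ** S) + trace (X' ** (blkAB A B ** S ** transpose (blkAB A B) + W))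
       = trace ((transpose A ** X' ** A - transpose A ** X' ** B ** matrix_inv G ** transpose B ** X' ** A + Q) ** Sg)
         + trace (X' ** W)
         + trace (transpose (F - (- (matrix_inv G ** transpose B ** X' ** A))) ** G
                  ** (F - (- (matrix_inv G ** transpose B ** X' ** A))) ** Sg)"
proof -
  let ?L = "stackIF F" and ?M = "blkAB A B"
  let ?P = "diagblk Q R + transpose ?M ** X' ** ?M"
  have t1: "trace (X' ** (?M ** S ** transpose ?M + W)) = trace (transpose ?M ** X' ** ?M ** S) + trace (X' ** W)"
  proof -
    have "trace (X' ** (?M ** S ** transpose ?M + W)) = trace ((X' ** ?M ** S) ** transpose ?M) + trace (X' ** W)"
      by (simp add: matrix_add_ldistrib trace_add matrix_mul_assoc)
    also have "trace ((X' ** ?M ** S) ** transpose ?M) = trace (transpose ?M ** (X' ** ?M ** S))"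
      by (rule trace_mul_sym)
    finally show ?thesis by (simp add: matrix_mul_assoc)
  qed
  have t2: "trace (diagblk Q R ** S) + trace (transpose ?M ** X' ** ?M ** S) = trace (?P ** S)"
    by (simp add: mm_add_r trace_add)
  have t3: "trace (?P ** S) = trace ((transpose ?L ** ?P ** ?L) ** Sg)"
  proof -
    have "trace (?P ** S) = trace ((?P ** ?L ** Sg) ** transpose ?L)" by (simp add: S matrix_mul_assoc)
    also have "\<dots> = trace (transpose ?L ** (?P ** ?L ** Sg))" by (rule trace_mul_sym)
    finally show ?thesis by (simp add: matrix_mul_assoc)
  qed
  have GGi: "G ** matrix_inv G = mat 1" and GiG: "matrix_inv G ** G = mat 1"
    using matrix_inv_props[OF inv] by auto
  have Gis: "transpose (matrix_inv G) = matrix_inv G" by (rule matrix_inv_sym[OF inv Gs])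
  have K: "transpose ?L ** ?P ** ?L =
      (transpose A ** X' ** A - transpose A ** X' ** B ** matrix_inv G ** transpose B ** X' ** A + Q)
         + transpose (F - (- (matrix_inv G ** transpose B ** X' ** A))) ** G ** (F - (- (matrix_inv G ** transpose B ** X' ** A)))"
    unfolding KF by (rule riccati_complete[OF G GGi GiG Gis Xs])
  show ?thesis
    unfolding t1 using t2 t3 K by (simp add: mm_add_r trace_add)
qed




definition GG :: "real^'n^'n \<Rightarrow> real^'m^'n \<Rightarrow> nat \<Rightarrow> real^'n^'n \<Rightarrow> (nat \<Rightarrow> real^'n^'n)
                  \<Rightarrow> (nat \<Rightarrow> real^'m^'m) \<Rightarrow> nat \<Rightarrow> real^'m^'m" where
  "GG A B N Qf Q R k = R k + transpose B ** riccX A B N Qf Q R (Suc k) ** B"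

definition FS :: "real^'n^'n \<Rightarrow> real^'m^'n \<Rightarrow> nat \<Rightarrow> real^'n^'n \<Rightarrow> (nat \<Rightarrow> real^'n^'n)
                  \<Rightarrow> (nat \<Rightarrow> real^'m^'m) \<Rightarrow> nat \<Rightarrow> real^'n^'m" where
  "FS A B N Qf Q R k = - (matrix_inv (GG A B N Qf Q R k) ** transpose B ** riccX A B N Qf Q R (Suc k) ** A)"

definition sigm :: "real^'n^'n \<Rightarrow> real^'m^'n \<Rightarrow> real^'n^'n \<Rightarrow> real^'n^'n \<Rightarrow> real^'n
     \<Rightarrow> (nat \<Rightarrow> real^('n + 'm)^('n + 'm)) \<Rightarrow> nat \<Rightarrow> real^'n^'n" where
  "sigm A B W V z S k = (case k of 0 \<Rightarrow> V + outer z
       | Suc j \<Rightarrow> blkAB A B ** S j ** transpose (blkAB A B) + W)"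

lemma riccX_N: "riccX A B N Qf Q R N = Qf"
  by (simp add: riccX_def)

lemma riccX_step:
  assumes "k < N"
  shows "riccX A B N Qf Q R k =
    transpose A ** riccX A B N Qf Q R (Suc k) ** A
    - transpose A ** riccX A B N Qf Q R (Suc k) ** B ** matrix_inv (R k + transpose B ** riccX A B N Qf Q R (Suc k) ** B)
      ** transpose B ** riccX A B N Qf Q R (Suc k) ** A + Q k"
proof -
  have e: "N - k = Suc (N - Suc k)" using assms by simp
  have e2: "N - Suc (N - Suc k) = k" using assms by simp
  show ?thesis unfolding riccX_def e by (simp add: Let_def e2)
qed

lemma riccX_psd:
  assumes Qf: "psd Qf" and Q: "\<forall>k<N. psd (Q k)" and R: "\<forall>k<N. pd (R k)"
  shows "k \<le> N \<Longrightarrow> psd (riccX A B N Qf Q R k)"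
proof (induction "N - k" arbitrary: k)
  case 0
  then have "k = N" by simp
  then show ?case using Qf by (simp add: riccX_N)
next
  case (Suc j)
  then have kN: "k < N" by simp
  let ?X = "riccX A B N Qf Q R (Suc k)"
  have pX: "psd ?X" using Suc kN by simp
  let ?G = "R k + transpose B ** ?X ** B"
  have pG: "pd ?G" using R kN pd_add_psd psd_congr pX by blast
  have inv: "invertible ?G" by (rule pd_invertible[OF pG])
  have Gs: "transpose ?G = ?G" using pG unfolding pd_def by simp
  have Xs: "transpose ?X = ?X" using pX unfolding psd_def by simp
  have GGi: "?G ** matrix_inv ?G = mat 1" and GiG: "matrix_inv ?G ** ?G = mat 1"
    using matrix_inv_props[OF inv] by auto
  have Gis: "transpose (matrix_inv ?G) = matrix_inv ?G" by (rule matrix_inv_sym[OF inv Gs])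
  define Fs where "Fs = - (matrix_inv ?G ** transpose B ** ?X ** A)"
  have eq: "Q k + transpose Fs ** R k ** Fs + transpose (A + B ** Fs) ** ?X ** (A + B ** Fs)
       = riccX A B N Qf Q R k"
    using riccati_complete[OF refl GGi GiG Gis Xs, where Q="Q k" and A=A and F=Fs] unfolding Fs_def
    by (simp add: riccX_step[OF kN])
  have "psd (Q k + transpose Fs ** R k ** Fs + transpose (A + B ** Fs) ** ?X ** (A + B ** Fs))"
  proof -
    have "psd (R k)" using R kN pd_psd by blast
    then have "psd (transpose Fs ** R k ** Fs)" by (rule psd_congr)
    moreover have "psd (Q k)" using Q kN by blast
    moreover have "psd (transpose (A + B ** Fs) ** ?X ** (A + B ** Fs))" using pX by (rule psd_congr)
    ultimately show ?thesis by (intro psd_add)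
  qed
  then show ?case using eq by simp
qed

lemma dyn_S:
  assumes "dyn_feasible A B W V z N S F" "k < N"
  shows "S k = stackIF (F k) ** sigm A B W V z S k ** transpose (stackIF (F k))"
  using assms unfolding dyn_feasible_def sigm_def Phi_def
  by (cases k) auto

lemma sigm_psd:
  assumes feas: "dyn_feasible A B W V z N S F" and V: "pd V" and W: "pd W"
  shows "k \<le> N \<Longrightarrow> psd (sigm A B W V z S k)"
proof (induction k)
  case 0
  then show ?case using V by (simp add: sigm_def psd_add pd_psd psd_outer)
next
  case (Suc k)
  have kN: "k < N" using Suc by simp
  have pk: "psd (sigm A B W V z S k)" using Suc by simp
  have e1: "blkAB A B ** S k ** transpose (blkAB A B)
     = (blkAB A B ** stackIF (F k)) ** sigm A B W V z S k ** transpose (blkAB A B ** stackIF (F k))"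
    by (simp add: dyn_S[OF feas kN] matrix_mul_assoc matrix_transpose_mul)
  have "blkAB A B ** S k ** transpose (blkAB A B)
     = transpose (transpose (A + B ** F k)) ** sigm A B W V z S k ** transpose (A + B ** F k)"
    unfolding e1 blk_stack by simp
  moreover have "psd (transpose (transpose (A + B ** F k)) ** sigm A B W V z S k ** transpose (A + B ** F k))"
    by (rule psd_congr[OF pk])
  ultimately have "psd (blkAB A B ** S k ** transpose (blkAB A B))" by simp
  then show ?case by (simp add: sigm_def psd_add pd_psd[OF W])
qed




lemma lqr_decomp:
  fixes A :: "real^'n^'n" and B :: "real^'m^'n"
    and W V :: "real^'n^'n" and z :: "real^'n"
    and Qf :: "real^'n^'n" and Q :: "nat \<Rightarrow> real^'n^'n" and R :: "nat \<Rightarrow> real^'m^'m"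
  assumes N: "1 \<le> N" and Qf: "psd Qf" and Q: "\<forall>k<N. psd (Q k)" and R: "\<forall>k<N. pd (R k)"
    and feas: "dyn_feasible A B W V z N S F"
  shows "cost A B W N Qf Q R S = trace (riccX A B N Qf Q R 0 ** (V + outer z))
           + (\<Sum>k<N. trace (riccX A B N Qf Q R (Suc k) ** W))
           + (\<Sum>k<N. trace (transpose (F k - FS A B N Qf Q R k) ** GG A B N Qf Q R k
                 ** (F k - FS A B N Qf Q R k) ** sigm A B W V z S k))"
proof -
  let ?X = "riccX A B N Qf Q R"
  let ?sg = "sigm A B W V z S"
  define a where "a k = trace (?X k ** ?sg k)" for k
  define w where "w k = trace (?X (Suc k) ** W)" for k
  define d where "d k = trace (transpose (F k - FS A B N Qf Q R k) ** GG A B N Qf Q R k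
                 ** (F k - FS A B N Qf Q R k) ** ?sg k)" for k
  define c where "c k = trace (diagblk (Q k) (R k) ** S k)" for k
  have step: "c k + a (Suc k) = a k + w k + d k" if kN: "k < N" for k
  proof -
    have pX: "psd (?X (Suc k))" using riccX_psd[OF Qf Q R, of "Suc k"] kN by simp
    have Xs: "transpose (?X (Suc k)) = ?X (Suc k)" using pX unfolding psd_def by simp
    have pG: "pd (GG A B N Qf Q R k)" unfolding GG_def using R kN pd_add_psd psd_congr pX by blast
    have inv: "invertible (GG A B N Qf Q R k)" by (rule pd_invertible[OF pG])
    have Gs: "transpose (GG A B N Qf Q R k) = GG A B N Qf Q R k" using pG unfolding pd_def by simp
    have "trace (diagblk (Q k) (R k) ** S k) + trace (?X (Suc k) ** (blkAB A B ** S k ** transpose (blkAB A B) + W))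
       = trace ((transpose A ** ?X (Suc k) ** A - transpose A ** ?X (Suc k) ** B ** matrix_inv (GG A B N Qf Q R k) ** transpose B ** ?X (Suc k) ** A + Q k) ** ?sg k)
         + trace (?X (Suc k) ** W)
         + trace (transpose (F k - (- (matrix_inv (GG A B N Qf Q R k) ** transpose B ** ?X (Suc k) ** A))) ** GG A B N Qf Q R k
                  ** (F k - (- (matrix_inv (GG A B N Qf Q R k) ** transpose B ** ?X (Suc k) ** A))) ** ?sg k)"
      by (rule step_identity[OF GG_def inv Gs Xs dyn_S[OF feas kN]])
    then show ?thesis
      unfolding a_def w_def d_def c_def FS_def[symmetric]
      by (simp add: sigm_def riccX_step[OF kN] GG_def)
  qed
  have sums: "(\<Sum>k<N. c k) + (\<Sum>k<N. a (Suc k)) = (\<Sum>k<N. a k) + (\<Sum>k<N. w k) + (\<Sum>k<N. d k)"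
    using step by (simp add: sum.distrib[symmetric])
  have tel: "(\<Sum>k<N. a (Suc k)) - (\<Sum>k<N. a k) = a N - a 0"
    using sum_lessThan_telescope[of a N] by (simp add: sum_subtractf)
  have cN: "cost A B W N Qf Q R S = a N + (\<Sum>k<N. c k)"
  proof -
    obtain M where M: "N = Suc M" using N by (cases N) auto
    have "?sg N = blkAB A B ** S (N - 1) ** transpose (blkAB A B) + W"
      unfolding M by (simp add: sigm_def)
    then show ?thesis unfolding cost_def a_def c_def by (simp add: riccX_N)
  qed
  have "cost A B W N Qf Q R S = a 0 + (\<Sum>k<N. w k) + (\<Sum>k<N. d k)"
    using cN sums tel by linarith
  then show ?thesis by (simp add: a_def w_def d_def sigm_def)
qed

lemma lqr_opt:
  fixes A :: "real^'n^'n" and B :: "real^'m^'n"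
    and W V :: "real^'n^'n" and z :: "real^'n"
    and Qf :: "real^'n^'n" and Q :: "nat \<Rightarrow> real^'n^'n" and R :: "nat \<Rightarrow> real^'m^'m"
  assumes N: "1 \<le> N" and Qf: "psd Qf" and Q: "\<forall>k<N. psd (Q k)" and R: "\<forall>k<N. pd (R k)"
    and V: "pd V" and W: "pd W"
    and feas: "dyn_feasible A B W V z N S F"
    and feas0: "dyn_feasible A B W V z N S0 F0"
    and F0: "\<forall>k<N. F0 k = FS A B N Qf Q R k"
  shows "cost A B W N Qf Q R S0 \<le> cost A B W N Qf Q R S"
proof -
  have "0 \<le> trace (transpose (F k - FS A B N Qf Q R k) ** GG A B N Qf Q R k
                 ** (F k - FS A B N Qf Q R k) ** sigm A B W V z S k)" if kN: "k < N" for k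
  proof -
    have pX: "psd (riccX A B N Qf Q R (Suc k))" using riccX_psd[OF Qf Q R, of "Suc k"] kN by simp
    have pG: "pd (GG A B N Qf Q R k)" unfolding GG_def using R kN pd_add_psd psd_congr pX by blast
    have "psd (transpose (F k - FS A B N Qf Q R k) ** GG A B N Qf Q R k ** (F k - FS A B N Qf Q R k))"
      by (rule psd_congr[OF pd_psd[OF pG]])
    moreover have "psd (sigm A B W V z S k)" using sigm_psd[OF feas V W, of k] kN by simp
    ultimately show ?thesis by (rule trace_psd_nonneg)
  qed
  then have "0 \<le> (\<Sum>k<N. trace (transpose (F k - FS A B N Qf Q R k) ** GG A B N Qf Q R k
                 ** (F k - FS A B N Qf Q R k) ** sigm A B W V z S k))"
    by (intro sum_nonneg) auto
  moreover have "(\<Sum>k<N. trace (transpose (F0 k - FS A B N Qf Q R k) ** GG A B N Qf Q R k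
                 ** (F0 k - FS A B N Qf Q R k) ** sigm A B W V z S0 k)) = 0"
    using F0 by (intro sum.neutral) (simp add: trace_def)
  ultimately show ?thesis
    using lqr_decomp[OF N Qf Q R feas] lqr_decomp[OF N Qf Q R feas0] by linarith
qed




lemma psd_scale: "psd M \<Longrightarrow> 0 \<le> c \<Longrightarrow> psd (c *\<^sub>R (M::real^'n^'n))"
  unfolding psd_def by (simp add: transpose_scalar scaleR_mv)

lemma diagblk_comb: "diagblk (Q + c *\<^sub>R Q') (R + c *\<^sub>R R') = diagblk Q R + c *\<^sub>R diagblk Q' R'"
  by (simp add: diagblk_def vec_eq_iff split: sum.split)

lemma cost_comb:
  "cost A B W N (Qf + c *\<^sub>R Qft) (\<lambda>i. Q i + c *\<^sub>R Qt i) (\<lambda>i. R i + c *\<^sub>R Rt i) S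
   = cost A B W N Qf Q R S + c * cost A B W N Qft Qt Rt S"
  unfolding cost_def
  by (simp add: diagblk_comb mm_add_r trace_add scalar_matrix_assoc[symmetric] trace_scaleR
       sum.distrib sum_distrib_left algebra_simps)

theorem proposition6:
  fixes A :: "real^'n^'n" and B :: "real^'m^'n"
    and W V :: "real^'n^'n" and z :: "real^'n"
    and Qf Qft :: "real^'n^'n" and Q Qt :: "nat \<Rightarrow> real^'n^'n"
    and R Rt :: "nat \<Rightarrow> real^'m^'m"
    and N :: nat and gamma rho lam :: real
  assumes N: "1 \<le> N"
    and Qf_psd: "psd Qf" and Qft_psd: "psd Qft"
    and Q_psd: "\<forall>k<N. psd (Q k) \<and> psd (Qt k)"
    and R_pd: "\<forall>k<N. \<forall>mu>0. pd (R k + mu *\<^sub>R Rt k)"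
    and V_pd: "pd V" and W_pd: "pd W"
    and slater: "\<exists>S F. dyn_feasible A B W V z N S F \<and> cost A B W N Qft Qt Rt S < gamma"
    and lam_pos: "lam > 0"
    and acc: "\<bar>cost A B W N Qft Qt Rt (Slam A B W V z N Qf Q R Qft Qt Rt lam) - gamma\<bar> \<le> rho"
  shows "let a = cost A B W N Qft Qt Rt (Slam A B W V z N Qf Q R Qft Qt Rt lam) - gamma in
           gamma - rho \<le> gamma + a \<and> gamma + a \<le> gamma + rho \<and>
           cov_optimal A B W V z N Qf Q R Qft Qt Rt (gamma + a)
             (Slam A B W V z N Qf Q R Qft Qt Rt lam) (Flam A B N Qf Q R Qft Qt Rt lam)"
proof -
  let ?Sl = "Slam A B W V z N Qf Q R Qft Qt Rt lam"
  let ?Fl = "Flam A B N Qf Q R Qft Qt Rt lam"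
  let ?Qf = "Qf + lam *\<^sub>R Qft"
  let ?Q = "\<lambda>i. Q i + lam *\<^sub>R Qt i"
  let ?R = "\<lambda>i. R i + lam *\<^sub>R Rt i"
  have FS_eq: "\<forall>k<N. ?Fl k = FS A B N ?Qf ?Q ?R k"
    by (simp add: Flam_def Xlam_def FS_def GG_def Let_def)
  have feas: "dyn_feasible A B W V z N ?Sl ?Fl"
    unfolding dyn_feasible_def
  proof (intro conjI allI impI)
    show "?Sl 0 = stackIF (?Fl 0) ** (V + outer z) ** transpose (stackIF (?Fl 0))"
      by (simp add: Let_def)
    fix k assume "1 \<le> k \<and> k < N"
    then obtain j where "k = Suc j" by (cases k) auto
    then show "?Sl k = Phi A B W (?Fl k) (?Sl (k - 1))" by simp
  qed
  have pQf: "psd ?Qf" using Qf_psd Qft_psd lam_pos by (intro psd_add psd_scale) auto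
  have pQ: "\<forall>k<N. psd (?Q k)" using Q_psd lam_pos by (auto intro!: psd_add psd_scale)
  have pR: "\<forall>k<N. pd (?R k)" using R_pd lam_pos by auto
  define a where "a = cost A B W N Qft Qt Rt ?Sl - gamma"
  have opt: "cov_optimal A B W V z N Qf Q R Qft Qt Rt (gamma + a) ?Sl ?Fl"
    unfolding cov_optimal_def
  proof (intro conjI allI impI)
    show "dyn_feasible A B W V z N ?Sl ?Fl" by (rule feas)
    show "cost A B W N Qft Qt Rt ?Sl \<le> gamma + a" by (simp add: a_def)
    fix S' F'
    assume H: "dyn_feasible A B W V z N S' F' \<and> cost A B W N Qft Qt Rt S' \<le> gamma + a"
    have "cost A B W N ?Qf ?Q ?R ?Sl \<le> cost A B W N ?Qf ?Q ?R S'"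
      using lqr_opt[OF N pQf pQ pR V_pd W_pd _ feas FS_eq] H by blast
    then have le: "cost A B W N Qf Q R ?Sl + lam * cost A B W N Qft Qt Rt ?Sl
        \<le> cost A B W N Qf Q R S' + lam * cost A B W N Qft Qt Rt S'"
      by (simp only: cost_comb)
    have "lam * cost A B W N Qft Qt Rt S' \<le> lam * cost A B W N Qft Qt Rt ?Sl"
      using H lam_pos by (intro mult_left_mono) (auto simp: a_def)
    then show "cost A B W N Qf Q R ?Sl \<le> cost A B W N Qf Q R S'" using le by linarith
  qed
  show ?thesis
    unfolding Let_def a_def[symmetric] using opt acc by (auto simp: a_def abs_le_iff)
qed


end
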